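(* For $0<c<1$ and curves $\gamma(r)$, $\tilde\gamma(s)$ in $\mathbb{H}^2$ parametrized by arc length with unit normal fields $N(r)$, $\tilde N(s)$ and curvatures $\kappa(r)$, $\tilde\kappa(s)$ (so $\gamma''=\gamma+\kappa N$, $N'=-\kappa\gamma'$, and similarly for $\tilde\gamma$), let $M^c_{\kappa,\tilde\kappa}$ be the hypersurface of $\mathbb{H}^2\times\mathbb{H}^2$ given by the immersion $(t,r,s)\mapsto\big(\cosh(\sqrt c\,t)\gamma(r)+\sinh(\sqrt c\,t)N(r),\ \cosh(\sqrt{1-c}\,t)\tilde\gamma(s)+\sinh(\sqrt{1-c}\,t)\tilde N(s)\big)$, and let $M$ be an open part of $M^c_{\kappa,\tilde\kappa}$. Then: (1) $M$ is minimal if and only if $c=\tfrac12$ and $\kappa(r)$ and $\tilde\kappa(s)$ are equal to the same constant; (2) $M$ has constant sectional curvature if and only if $c=\tfrac12$ and $\kappa$, $\tilde\kappa$ are constants satisfying $\kappa\tilde\kappa=1$; moreover, in that case the sectional curvature of $M$ equals $-\tfrac12$.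
   Context: $\mathbb{R}^3_1$ denotes $\mathbb{R}^3$ with the Lorentzian inner product $\langle x,y\rangle=-x_1y_1+x_2y_2+x_3y_3$, $\mathbb{H}^2=\{x\in\mathbb{R}^3_1:\langle x,x\rangle=-1,\ x_1>0\}$, and $\mathbb{H}^2\times\mathbb{H}^2\subset\mathbb{R}^3_1\times\mathbb{R}^3_1$ carries the Riemannian product metric; $M$ carries the induced metric. *)

theory Defs
  imports "HOL-Analysis.Analysis"
begin

definition lor :: "real^3 \<Rightarrow> real^3 \<Rightarrow> real" where
  "lor x y = - x$1 * y$1 + x$2 * y$2 + x$3 * y$3"

text \<open>Inner product on R^3_1 x R^3_1 (restricts to the product Riemannian metric
  on H2 x H2).\<close>
definition ip6 :: "(real^3) \<times> (real^3) \<Rightarrow> (real^3) \<times> (real^3) \<Rightarrow> real" where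
  "ip6 u v = lor (fst u) (fst v) + lor (snd u) (snd v)"

definition frenet_curve ::
  "real set \<Rightarrow> (real \<Rightarrow> real^3) \<Rightarrow> (real \<Rightarrow> real^3) \<Rightarrow> (real \<Rightarrow> real) \<Rightarrow> bool" where
  "frenet_curve I gam N kap \<longleftrightarrow> open I \<and>
     (\<forall>r\<in>I. gam differentiable (at r) \<and>
        lor (gam r) (gam r) = -1 \<and> gam r $ 1 > 0 \<and>
        lor (vector_derivative gam (at r)) (vector_derivative gam (at r)) = 1 \<and>
        lor (N r) (N r) = 1 \<and> lor (N r) (gam r) = 0 \<and>
        lor (N r) (vector_derivative gam (at r)) = 0 \<and>
        ((\<lambda>q. vector_derivative gam (at q)) has_vector_derivative
            (gam r + kap r *\<^sub>R N r)) (at r) \<and>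
        (N has_vector_derivative (- kap r *\<^sub>R vector_derivative gam (at r))) (at r)) \<and>
     (\<forall>n. \<forall>r\<in>I. ((deriv ^^ n) kap) differentiable (at r))"

text \<open>The immersion (t,r,s) -> ..., with parameters x = (t,r,s) = (x$1, x$2, x$3).\<close>
definition Fmap ::
  "real \<Rightarrow> (real \<Rightarrow> real^3) \<Rightarrow> (real \<Rightarrow> real^3) \<Rightarrow> (real \<Rightarrow> real^3) \<Rightarrow> (real \<Rightarrow> real^3)
     \<Rightarrow> real^3 \<Rightarrow> (real^3) \<times> (real^3)" where
  "Fmap c gam N gamt Nt x =
     (cosh (sqrt c * x$1) *\<^sub>R gam (x$2) + sinh (sqrt c * x$1) *\<^sub>R N (x$2),
      cosh (sqrt (1 - c) * x$1) *\<^sub>R gamt (x$3) + sinh (sqrt (1 - c) * x$1) *\<^sub>R Nt (x$3))"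

definition pd :: "3 \<Rightarrow> (real^3 \<Rightarrow> 'b::real_normed_vector) \<Rightarrow> real^3 \<Rightarrow> 'b" where
  "pd i f x = vector_derivative (\<lambda>h. f (x + h *\<^sub>R axis i 1)) (at 0)"

definition metric :: "(real^3 \<Rightarrow> (real^3) \<times> (real^3)) \<Rightarrow> real^3 \<Rightarrow> 3 \<Rightarrow> 3 \<Rightarrow> real" where
  "metric F x i j = ip6 (pd i F x) (pd j F x)"

definition ginv :: "(real^3 \<Rightarrow> (real^3) \<times> (real^3)) \<Rightarrow> real^3 \<Rightarrow> 3 \<Rightarrow> 3 \<Rightarrow> real" where
  "ginv F x i j = matrix_inv (\<chi> a b. metric F x a b) $ i $ j"

definition gform :: "(real^3 \<Rightarrow> (real^3) \<times> (real^3)) \<Rightarrow> real^3 \<Rightarrow> real^3 \<Rightarrow> real^3 \<Rightarrow> real" where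
  "gform F x X Y = (\<Sum>i\<in>UNIV. \<Sum>j\<in>UNIV. X$i * Y$j * metric F x i j)"

definition immersion_on :: "(real^3 \<Rightarrow> (real^3) \<times> (real^3)) \<Rightarrow> (real^3) set \<Rightarrow> bool" where
  "immersion_on F U \<longleftrightarrow> (\<forall>x\<in>U. \<forall>v. v \<noteq> 0 \<longrightarrow> gform F x v v > 0)"

definition christ :: "(real^3 \<Rightarrow> (real^3) \<times> (real^3)) \<Rightarrow> real^3 \<Rightarrow> 3 \<Rightarrow> 3 \<Rightarrow> 3 \<Rightarrow> real" where
  "christ F x k i j = 1/2 * (\<Sum>l\<in>UNIV. ginv F x k l *
      (pd i (\<lambda>y. metric F y j l) x + pd j (\<lambda>y. metric F y i l) x - pd l (\<lambda>y. metric F y i j) x))"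

text \<open>R(d_i,d_j)d_k = sum_l riem_up l i j k d_l, where
  R(X,Y) = nabla_X nabla_Y - nabla_Y nabla_X - nabla_[X,Y].\<close>
definition riem_up :: "(real^3 \<Rightarrow> (real^3) \<times> (real^3)) \<Rightarrow> real^3 \<Rightarrow> 3 \<Rightarrow> 3 \<Rightarrow> 3 \<Rightarrow> 3 \<Rightarrow> real" where
  "riem_up F x l i j k =
     pd i (\<lambda>y. christ F y l j k) x - pd j (\<lambda>y. christ F y l i k) x +
     (\<Sum>m\<in>UNIV. christ F x m j k * christ F x l i m - christ F x m i k * christ F x l j m)"

definition riem :: "(real^3 \<Rightarrow> (real^3) \<times> (real^3)) \<Rightarrow> real^3 \<Rightarrow> 3 \<Rightarrow> 3 \<Rightarrow> 3 \<Rightarrow> 3 \<Rightarrow> real" where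
  "riem F x i j k l = (\<Sum>m\<in>UNIV. riem_up F x m i j k * metric F x m l)"

definition sec_curv :: "(real^3 \<Rightarrow> (real^3) \<times> (real^3)) \<Rightarrow> real^3 \<Rightarrow> real^3 \<Rightarrow> real^3 \<Rightarrow> real" where
  "sec_curv F x X Y =
     (\<Sum>i\<in>UNIV. \<Sum>j\<in>UNIV. \<Sum>k\<in>UNIV. \<Sum>l\<in>UNIV. X$i * Y$j * Y$k * X$l * riem F x i j k l) /
     (gform F x X X * gform F x Y Y - (gform F x X Y)^2)"

definition const_sec_curv :: "(real^3 \<Rightarrow> (real^3) \<times> (real^3)) \<Rightarrow> (real^3) set \<Rightarrow> real \<Rightarrow> bool" where
  "const_sec_curv F U K \<longleftrightarrow>
     (\<forall>x\<in>U. \<forall>X Y. gform F x X X * gform F x Y Y - (gform F x X Y)^2 \<noteq> 0 \<longrightarrow>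
        sec_curv F x X Y = K)"

definition unit_normal :: "(real^3 \<Rightarrow> (real^3) \<times> (real^3)) \<Rightarrow> real^3 \<Rightarrow> (real^3) \<times> (real^3) \<Rightarrow> bool" where
  "unit_normal F x xi \<longleftrightarrow>
     lor (fst (F x)) (fst xi) = 0 \<and> lor (snd (F x)) (snd xi) = 0 \<and>
     (\<forall>i. ip6 (pd i F x) xi = 0) \<and> ip6 xi xi = 1"

definition mean_curv :: "(real^3 \<Rightarrow> (real^3) \<times> (real^3)) \<Rightarrow> real^3 \<Rightarrow> (real^3) \<times> (real^3) \<Rightarrow> real" where
  "mean_curv F x xi = 1/3 * (\<Sum>i\<in>UNIV. \<Sum>j\<in>UNIV. ginv F x i j * ip6 (pd i (pd j F) x) xi)"

definition minimal_on :: "(real^3 \<Rightarrow> (real^3) \<times> (real^3)) \<Rightarrow> (real^3) set \<Rightarrow> bool" where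
  "minimal_on F U \<longleftrightarrow> (\<forall>x\<in>U. \<forall>xi. unit_normal F x xi \<longrightarrow> mean_curv F x xi = 0)"

end

theory Submission
  imports Defs
begin
lemma pd_eq: "((\<lambda>h. f (x + h *\<^sub>R axis i 1)) has_vector_derivative D) (at 0) \<Longrightarrow> pd i f x = D"
  by (simp add: pd_def vector_derivative_at)

lemma pd_eq_real: "((\<lambda>h. f (x + h *\<^sub>R axis i 1)) has_real_derivative D) (at 0) \<Longrightarrow> pd i f x = D"
  by (simp add: pd_eq has_real_derivative_iff_has_vector_derivative)

lemma pd_local:
  assumes S: "open S" "x \<in> S" and eq: "\<And>y. y \<in> S \<Longrightarrow> f y = g y"
  shows "pd i f x = pd i g x"
proof -
  let ?T = "(\<lambda>h::real. x + h *\<^sub>R axis i (1::real)) -` S"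
  have cT: "continuous_on UNIV (\<lambda>h::real. x + h *\<^sub>R axis i (1::real))"
    by (intro continuous_intros)
  have oT: "open ?T" using open_vimage[OF S(1) cT] by simp
  have zT: "0 \<in> ?T" using S by simp
  have "\<And>D. ((\<lambda>h. f (x + h *\<^sub>R axis i 1)) has_vector_derivative D) (at 0) \<longleftrightarrow>
         ((\<lambda>h. g (x + h *\<^sub>R axis i 1)) has_vector_derivative D) (at 0)"
  proof
    fix D assume "((\<lambda>h. f (x + h *\<^sub>R axis i 1)) has_vector_derivative D) (at 0)"
    then show "((\<lambda>h. g (x + h *\<^sub>R axis i 1)) has_vector_derivative D) (at 0)"
      by (rule has_vector_derivative_transform_within_open[OF _ oT zT]) (simp add: eq)
  next
    fix D assume "((\<lambda>h. g (x + h *\<^sub>R axis i 1)) has_vector_derivative D) (at 0)"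
    then show "((\<lambda>h. f (x + h *\<^sub>R axis i 1)) has_vector_derivative D) (at 0)"
      by (rule has_vector_derivative_transform_within_open[OF _ oT zT]) (simp add: eq)
  qed
  then show ?thesis unfolding pd_def vector_derivative_def by simp
qed

lemma axis_comp: "(x + h *\<^sub>R axis i (1::real)) $ j = x $ j + (if j = i then h else 0)"
  by (simp add: axis_def)

lemma ne3: "(1::3) \<noteq> 2" "(1::3) \<noteq> 3" "(2::3) \<noteq> 3" "(2::3) \<noteq> 1" "(3::3) \<noteq> 1" "(3::3) \<noteq> 2"
  by simp_all

lemma shift_vd: "(g has_vector_derivative D) (at r) \<Longrightarrow> ((\<lambda>h. g (r + h)) has_vector_derivative D) (at 0)"
proof -
  assume g: "(g has_vector_derivative D) (at r)"
  have "((\<lambda>h::real. r + h) has_vector_derivative 1) (at 0)"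
    by (auto intro!: derivative_eq_intros simp: has_real_derivative_iff_has_vector_derivative[symmetric])
  from vector_diff_chain_at[OF this] g show ?thesis by (simp add: o_def)
qed

lemma shift_rd: "(g has_real_derivative D) (at r) \<Longrightarrow> ((\<lambda>h. g (r + h)) has_real_derivative D) (at 0)"
  using shift_vd by (simp add: has_real_derivative_iff_has_vector_derivative)

lemma lor_add_left[simp]: "lor (x + y) z = lor x z + lor y z"
  and lor_add_right[simp]: "lor z (x + y) = lor z x + lor z y"
  and lor_scale_left[simp]: "lor (k *\<^sub>R x) z = k * lor x z"
  and lor_scale_right[simp]: "lor z (k *\<^sub>R x) = k * lor z x"
  and lor_minus_left[simp]: "lor (- x) z = - lor x z"
  and lor_minus_right[simp]: "lor z (- x) = - lor z x"
  and lor_diff_left[simp]: "lor (x - y) z = lor x z - lor y z"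
  and lor_diff_right[simp]: "lor z (x - y) = lor z x - lor z y"
  and lor_zero_left[simp]: "lor 0 z = 0"
  and lor_zero_right[simp]: "lor z 0 = 0"
  by (simp_all add: lor_def algebra_simps)

lemma lor_sym: "lor x y = lor y x"
  by (simp add: lor_def algebra_simps)

lemma bb_lor: "bounded_bilinear lor"
proof
  show "\<exists>K. \<forall>x y. norm (lor x y) \<le> norm x * norm y * K"
  proof (intro exI allI)
    fix x y :: "real^3"
    have "\<bar>lor x y\<bar> \<le> \<bar>x$1\<bar> * \<bar>y$1\<bar> + \<bar>x$2\<bar> * \<bar>y$2\<bar> + \<bar>x$3\<bar> * \<bar>y$3\<bar>"
      by (simp add: lor_def abs_mult[symmetric])
    also have "\<dots> \<le> norm x * norm y + norm x * norm y + norm x * norm y"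
      by (intro add_mono mult_mono component_le_norm_cart) auto
    finally show "norm (lor x y) \<le> norm x * norm y * 3" by simp
  qed
qed simp_all

locale fcurve =
  fixes I :: "real set" and gam N :: "real \<Rightarrow> real^3" and kap :: "real \<Rightarrow> real"
  assumes fc: "frenet_curve I gam N kap"
begin

abbreviation T where "T r \<equiv> vector_derivative gam (at r)"

lemma openI: "open I" using fc by (simp add: frenet_curve_def)

lemma gam_D: "r \<in> I \<Longrightarrow> (gam has_vector_derivative T r) (at r)"
  using fc by (simp add: frenet_curve_def vector_derivative_works[symmetric])

lemma T_D: "r \<in> I \<Longrightarrow> ((\<lambda>q. T q) has_vector_derivative (gam r + kap r *\<^sub>R N r)) (at r)"
  using fc by (simp add: frenet_curve_def)

lemma N_D: "r \<in> I \<Longrightarrow> (N has_vector_derivative (- kap r *\<^sub>R T r)) (at r)"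
  using fc by (simp add: frenet_curve_def)

lemma kap_D: "r \<in> I \<Longrightarrow> (kap has_real_derivative deriv kap r) (at r)"
proof -
  assume r: "r \<in> I"
  have "((deriv ^^ 0) kap) differentiable (at r)" using fc r unfolding frenet_curve_def by blast
  then show ?thesis by (simp add: DERIV_deriv_iff_real_differentiable)
qed

lemma dkap_D: "r \<in> I \<Longrightarrow> (deriv kap has_real_derivative deriv (deriv kap) r) (at r)"
proof -
  assume r: "r \<in> I"
  have "((deriv ^^ 1) kap) differentiable (at r)" using fc r unfolding frenet_curve_def by blast
  then show ?thesis by (simp add: DERIV_deriv_iff_real_differentiable)
qed

lemma lor_gg: "r \<in> I \<Longrightarrow> lor (gam r) (gam r) = -1"
  and lor_TT: "r \<in> I \<Longrightarrow> lor (T r) (T r) = 1"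
  and lor_NN: "r \<in> I \<Longrightarrow> lor (N r) (N r) = 1"
  and lor_Ng: "r \<in> I \<Longrightarrow> lor (N r) (gam r) = 0"
  and lor_NT: "r \<in> I \<Longrightarrow> lor (N r) (T r) = 0"
  using fc by (auto simp: frenet_curve_def)

lemma lor_gT: "r \<in> I \<Longrightarrow> lor (gam r) (T r) = 0"
proof -
  assume r: "r \<in> I"
  have d: "((\<lambda>q. lor (gam q) (gam q)) has_vector_derivative (lor (gam r) (T r) + lor (T r) (gam r))) (at r)"
    using bounded_bilinear.has_vector_derivative[OF bb_lor gam_D[OF r] gam_D[OF r]] .
  have "((\<lambda>q. lor (gam q) (gam q)) has_vector_derivative 0) (at r)"
    by (rule has_vector_derivative_transform_within_open[of "\<lambda>q. -1" 0 r I])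
       (auto simp: openI r lor_gg)
  with d have "lor (gam r) (T r) + lor (T r) (gam r) = 0"
    using vector_derivative_unique_at by blast
  then show ?thesis by (simp add: lor_sym[of "T r"])
qed

lemmas lor_facts = lor_gg lor_TT lor_NN lor_Ng lor_NT lor_gT
  lor_Ng[simplified lor_sym] lor_NT[simplified lor_sym] lor_gT[simplified lor_sym]

end

locale setting = C1: fcurve I gam N kap + C2: fcurve J gamt Nt kapt
  for I gam N kap J gamt Nt kapt +
  fixes c :: real and U :: "(real^3) set"
  assumes c0: "0 < c" and c1: "c < 1" and openU: "open U"
    and UW: "U \<subseteq> {x. x$2 \<in> I \<and> x$3 \<in> J}"
    and imm: "immersion_on (Fmap c gam N gamt Nt) U"
begin

abbreviation "F \<equiv> Fmap c gam N gamt Nt"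
abbreviation "a \<equiv> sqrt c"
abbreviation "b \<equiv> sqrt (1 - c)"
abbreviation "Tt s \<equiv> vector_derivative gamt (at s)"

definition "A (y::real^3) = cosh (a * y$1) - kap (y$2) * sinh (a * y$1)"
definition "B (y::real^3) = cosh (b * y$1) - kapt (y$3) * sinh (b * y$1)"

lemma pdF1: "y$2 \<in> I \<Longrightarrow> y$3 \<in> J \<Longrightarrow> pd 1 F y =
   (a *\<^sub>R (sinh (a * y$1) *\<^sub>R gam (y$2) + cosh (a * y$1) *\<^sub>R N (y$2)),
    b *\<^sub>R (sinh (b * y$1) *\<^sub>R gamt (y$3) + cosh (b * y$1) *\<^sub>R Nt (y$3)))"
  apply (rule pd_eq)
  apply (simp add: Fmap_def axis_def)
  by (rule derivative_eq_intros | simp)+ (simp add: algebra_simps)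

abbreviation "T1 r \<equiv> vector_derivative gam (at r)"
abbreviation "T2 s \<equiv> vector_derivative gamt (at s)"

lemma pdF2: "y$2 \<in> I \<Longrightarrow> y$3 \<in> J \<Longrightarrow> pd 2 F y = (A y *\<^sub>R T1 (y$2), 0)"
  apply (rule pd_eq)
  apply (simp add: Fmap_def axis_def)
  apply (rule derivative_eq_intros shift_vd C1.gam_D C1.N_D | simp)+
  apply (simp add: A_def algebra_simps)
  done

lemma pdF3: "y$2 \<in> I \<Longrightarrow> y$3 \<in> J \<Longrightarrow> pd 3 F y = (0, B y *\<^sub>R T2 (y$3))"
  apply (rule pd_eq)
  apply (simp add: Fmap_def axis_def)
  apply (rule derivative_eq_intros shift_vd C2.gam_D C2.N_D | simp)+
  apply (simp add: B_def algebra_simps)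
  done

definition "At (y::real^3) = a * (sinh (a * y$1) - kap (y$2) * cosh (a * y$1))"
definition "Ar (y::real^3) = - deriv kap (y$2) * sinh (a * y$1)"
definition "Atr (y::real^3) = - a * deriv kap (y$2) * cosh (a * y$1)"
definition "Arr (y::real^3) = - deriv (deriv kap) (y$2) * sinh (a * y$1)"
definition "Bt (y::real^3) = b * (sinh (b * y$1) - kapt (y$3) * cosh (b * y$1))"
definition "Bs (y::real^3) = - deriv kapt (y$3) * sinh (b * y$1)"
definition "Bts (y::real^3) = - b * deriv kapt (y$3) * cosh (b * y$1)"
definition "Bss (y::real^3) = - deriv (deriv kapt) (y$3) * sinh (b * y$1)"

abbreviation "W \<equiv> {x::real^3. x$2 \<in> I \<and> x$3 \<in> J}"

lemma pd_via:
  assumes "(g has_real_derivative D) (at (x$i))" and "\<And>h. f (x + h *\<^sub>R axis i 1) = g (x$i + h)"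
  shows "pd i f x = D"
  using shift_rd[OF assms(1)] by (intro pd_eq_real) (simp add: assms(2))

lemma pd_const: "pd i (\<lambda>y. k::real) x = 0"
  by (rule pd_eq_real) simp

lemma sqcs: "sqrt c * sqrt c = c" "sqrt (1-c) * sqrt (1-c) = 1 - c" "\<bar>c\<bar> = c" "\<bar>1 - c\<bar> = 1 - c"
  "sqrt c * (sqrt c * z) = c * z" "sqrt (1-c) * (sqrt (1-c) * z) = (1 - c) * z"
  using c0 c1 by (auto simp: mult.assoc[symmetric])

lemma pd_Asq_1:
  assumes "x \<in> W"
  shows "pd 1 (\<lambda>y. A y ^ 2) x = 2 * A x * At x"
  apply (rule pd_via[where g="\<lambda>t. (cosh (a*t) - kap (x$2) * sinh (a*t)) ^ 2"])
  using assms
  apply (auto intro!: derivative_eq_intros C1.kap_D C1.dkap_D C2.kap_D C2.dkap_D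
      simp: A_def At_def Ar_def Atr_def Arr_def B_def Bt_def Bs_def Bts_def Bss_def axis_def)
  apply ((simp_all add: field_simps sqcs)?)
  apply ((simp_all add: algebra_simps sqcs minus_divide_left)?)
  done

lemma pd_Asq_2:
  assumes "x \<in> W"
  shows "pd 2 (\<lambda>y. A y ^ 2) x = 2 * A x * Ar x"
  apply (rule pd_via[where g="\<lambda>t. (cosh (a*(x$1)) - kap t * sinh (a*(x$1))) ^ 2"])
  using assms
  apply (auto intro!: derivative_eq_intros C1.kap_D C1.dkap_D C2.kap_D C2.dkap_D
      simp: A_def At_def Ar_def Atr_def Arr_def B_def Bt_def Bs_def Bts_def Bss_def axis_def)
  apply ((simp_all add: field_simps sqcs)?)
  apply ((simp_all add: algebra_simps sqcs minus_divide_left)?)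
  done

lemma pd_Asq_3:
  assumes "x \<in> W"
  shows "pd 3 (\<lambda>y. A y ^ 2) x = 0"
  apply (rule pd_via[where g="\<lambda>t. (cosh (a*(x$1)) - kap (x$2) * sinh (a*(x$1))) ^ 2"])
  using assms
  apply (auto intro!: derivative_eq_intros C1.kap_D C1.dkap_D C2.kap_D C2.dkap_D
      simp: A_def At_def Ar_def Atr_def Arr_def B_def Bt_def Bs_def Bts_def Bss_def axis_def)
  apply ((simp_all add: field_simps sqcs)?)
  apply ((simp_all add: algebra_simps sqcs minus_divide_left)?)
  done

lemma pd_Bsq_1:
  assumes "x \<in> W"
  shows "pd 1 (\<lambda>y. B y ^ 2) x = 2 * B x * Bt x"
  apply (rule pd_via[where g="\<lambda>t. (cosh (b*t) - kapt (x$3) * sinh (b*t)) ^ 2"])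
  using assms
  apply (auto intro!: derivative_eq_intros C1.kap_D C1.dkap_D C2.kap_D C2.dkap_D
      simp: A_def At_def Ar_def Atr_def Arr_def B_def Bt_def Bs_def Bts_def Bss_def axis_def)
  apply ((simp_all add: field_simps sqcs)?)
  apply ((simp_all add: algebra_simps sqcs minus_divide_left)?)
  done

lemma pd_Bsq_2:
  assumes "x \<in> W"
  shows "pd 2 (\<lambda>y. B y ^ 2) x = 0"
  apply (rule pd_via[where g="\<lambda>t. (cosh (b*(x$1)) - kapt (x$3) * sinh (b*(x$1))) ^ 2"])
  using assms
  apply (auto intro!: derivative_eq_intros C1.kap_D C1.dkap_D C2.kap_D C2.dkap_D
      simp: A_def At_def Ar_def Atr_def Arr_def B_def Bt_def Bs_def Bts_def Bss_def axis_def)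
  apply ((simp_all add: field_simps sqcs)?)
  apply ((simp_all add: algebra_simps sqcs minus_divide_left)?)
  done

lemma pd_Bsq_3:
  assumes "x \<in> W"
  shows "pd 3 (\<lambda>y. B y ^ 2) x = 2 * B x * Bs x"
  apply (rule pd_via[where g="\<lambda>t. (cosh (b*(x$1)) - kapt t * sinh (b*(x$1))) ^ 2"])
  using assms
  apply (auto intro!: derivative_eq_intros C1.kap_D C1.dkap_D C2.kap_D C2.dkap_D
      simp: A_def At_def Ar_def Atr_def Arr_def B_def Bt_def Bs_def Bts_def Bss_def axis_def)
  apply ((simp_all add: field_simps sqcs)?)
  apply ((simp_all add: algebra_simps sqcs minus_divide_left)?)
  done

lemma pd_f1_1:
  assumes "x \<in> W"
  shows "pd 1 (\<lambda>y. - (A y * At y)) x = - (At x * At x + c * A x * A x)"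
  apply (rule pd_via[where g="\<lambda>t. - ((cosh (a*t) - kap (x$2) * sinh (a*t)) * (a * (sinh (a*t) - kap (x$2) * cosh (a*t))))"])
  using assms
  apply (auto intro!: derivative_eq_intros C1.kap_D C1.dkap_D C2.kap_D C2.dkap_D
      simp: A_def At_def Ar_def Atr_def Arr_def B_def Bt_def Bs_def Bts_def Bss_def axis_def)
  apply ((simp_all add: field_simps sqcs)?)
  apply ((simp_all add: algebra_simps sqcs minus_divide_left)?)
  done

lemma pd_f1_2:
  assumes "x \<in> W"
  shows "pd 2 (\<lambda>y. - (A y * At y)) x = - (Ar x * At x + A x * Atr x)"
  apply (rule pd_via[where g="\<lambda>t. - ((cosh (a*(x$1)) - kap t * sinh (a*(x$1))) * (a * (sinh (a*(x$1)) - kap t * cosh (a*(x$1)))))"])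
  using assms
  apply (auto intro!: derivative_eq_intros C1.kap_D C1.dkap_D C2.kap_D C2.dkap_D
      simp: A_def At_def Ar_def Atr_def Arr_def B_def Bt_def Bs_def Bts_def Bss_def axis_def)
  apply ((simp_all add: field_simps sqcs)?)
  apply ((simp_all add: algebra_simps sqcs minus_divide_left)?)
  done

lemma pd_f1_3:
  assumes "x \<in> W"
  shows "pd 3 (\<lambda>y. - (A y * At y)) x = 0"
  apply (rule pd_via[where g="\<lambda>t. - ((cosh (a*(x$1)) - kap (x$2) * sinh (a*(x$1))) * (a * (sinh (a*(x$1)) - kap (x$2) * cosh (a*(x$1)))))"])
  using assms
  apply (auto intro!: derivative_eq_intros C1.kap_D C1.dkap_D C2.kap_D C2.dkap_D
      simp: A_def At_def Ar_def Atr_def Arr_def B_def Bt_def Bs_def Bts_def Bss_def axis_def)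
  apply ((simp_all add: field_simps sqcs)?)
  apply ((simp_all add: algebra_simps sqcs minus_divide_left)?)
  done

lemma pd_f2_1:
  assumes "x \<in> W" and "A x \<noteq> 0"
  shows "pd 1 (\<lambda>y. At y / A y) x = (c * A x * A x - At x * At x) / (A x * A x)"
  apply (rule pd_via[where g="\<lambda>t. (a * (sinh (a*t) - kap (x$2) * cosh (a*t))) / (cosh (a*t) - kap (x$2) * sinh (a*t))"])
  using assms
  apply (auto intro!: derivative_eq_intros C1.kap_D C1.dkap_D C2.kap_D C2.dkap_D
      simp: A_def At_def Ar_def Atr_def Arr_def B_def Bt_def Bs_def Bts_def Bss_def axis_def)
  apply ((simp_all add: field_simps sqcs)?)
  apply ((simp_all add: algebra_simps sqcs minus_divide_left)?)
  done

lemma pd_f2_2: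
  assumes "x \<in> W" and "A x \<noteq> 0"
  shows "pd 2 (\<lambda>y. At y / A y) x = (Atr x * A x - At x * Ar x) / (A x * A x)"
  apply (rule pd_via[where g="\<lambda>t. (a * (sinh (a*(x$1)) - kap t * cosh (a*(x$1)))) / (cosh (a*(x$1)) - kap t * sinh (a*(x$1)))"])
  using assms
  apply (auto intro!: derivative_eq_intros C1.kap_D C1.dkap_D C2.kap_D C2.dkap_D
      simp: A_def At_def Ar_def Atr_def Arr_def B_def Bt_def Bs_def Bts_def Bss_def axis_def)
  apply ((simp_all add: field_simps sqcs)?)
  apply ((simp_all add: algebra_simps sqcs minus_divide_left)?)
  done

lemma pd_f2_3:
  assumes "x \<in> W" and "A x \<noteq> 0"
  shows "pd 3 (\<lambda>y. At y / A y) x = 0"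
  apply (rule pd_via[where g="\<lambda>t. (a * (sinh (a*(x$1)) - kap (x$2) * cosh (a*(x$1)))) / (cosh (a*(x$1)) - kap (x$2) * sinh (a*(x$1)))"])
  using assms
  apply (auto intro!: derivative_eq_intros C1.kap_D C1.dkap_D C2.kap_D C2.dkap_D
      simp: A_def At_def Ar_def Atr_def Arr_def B_def Bt_def Bs_def Bts_def Bss_def axis_def)
  apply ((simp_all add: field_simps sqcs)?)
  apply ((simp_all add: algebra_simps sqcs minus_divide_left)?)
  done

lemma pd_f3_1:
  assumes "x \<in> W" and "A x \<noteq> 0"
  shows "pd 1 (\<lambda>y. Ar y / A y) x = (Atr x * A x - Ar x * At x) / (A x * A x)"
  apply (rule pd_via[where g="\<lambda>t. (- deriv kap (x$2) * sinh (a*t)) / (cosh (a*t) - kap (x$2) * sinh (a*t))"])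
  using assms
  apply (auto intro!: derivative_eq_intros C1.kap_D C1.dkap_D C2.kap_D C2.dkap_D
      simp: A_def At_def Ar_def Atr_def Arr_def B_def Bt_def Bs_def Bts_def Bss_def axis_def)
  apply ((simp_all add: field_simps sqcs)?)
  apply ((simp_all add: algebra_simps sqcs minus_divide_left)?)
  done

lemma pd_f3_2:
  assumes "x \<in> W" and "A x \<noteq> 0"
  shows "pd 2 (\<lambda>y. Ar y / A y) x = (Arr x * A x - Ar x * Ar x) / (A x * A x)"
  apply (rule pd_via[where g="\<lambda>t. (- deriv kap t * sinh (a*(x$1))) / (cosh (a*(x$1)) - kap t * sinh (a*(x$1)))"])
  using assms
  apply (auto intro!: derivative_eq_intros C1.kap_D C1.dkap_D C2.kap_D C2.dkap_D
      simp: A_def At_def Ar_def Atr_def Arr_def B_def Bt_def Bs_def Bts_def Bss_def axis_def)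
  apply ((simp_all add: field_simps sqcs)?)
  apply ((simp_all add: algebra_simps sqcs minus_divide_left)?)
  done

lemma pd_f3_3:
  assumes "x \<in> W" and "A x \<noteq> 0"
  shows "pd 3 (\<lambda>y. Ar y / A y) x = 0"
  apply (rule pd_via[where g="\<lambda>t. (- deriv kap (x$2) * sinh (a*(x$1))) / (cosh (a*(x$1)) - kap (x$2) * sinh (a*(x$1)))"])
  using assms
  apply (auto intro!: derivative_eq_intros C1.kap_D C1.dkap_D C2.kap_D C2.dkap_D
      simp: A_def At_def Ar_def Atr_def Arr_def B_def Bt_def Bs_def Bts_def Bss_def axis_def)
  apply ((simp_all add: field_simps sqcs)?)
  apply ((simp_all add: algebra_simps sqcs minus_divide_left)?)
  done

lemma pd_g1_1:
  assumes "x \<in> W"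
  shows "pd 1 (\<lambda>y. - (B y * Bt y)) x = - (Bt x * Bt x + (1 - c) * B x * B x)"
  apply (rule pd_via[where g="\<lambda>t. - ((cosh (b*t) - kapt (x$3) * sinh (b*t)) * (b * (sinh (b*t) - kapt (x$3) * cosh (b*t))))"])
  using assms
  apply (auto intro!: derivative_eq_intros C1.kap_D C1.dkap_D C2.kap_D C2.dkap_D
      simp: A_def At_def Ar_def Atr_def Arr_def B_def Bt_def Bs_def Bts_def Bss_def axis_def)
  apply ((simp_all add: field_simps sqcs)?)
  apply ((simp_all add: algebra_simps sqcs minus_divide_left)?)
  done

lemma pd_g1_2:
  assumes "x \<in> W"
  shows "pd 2 (\<lambda>y. - (B y * Bt y)) x = 0"
  apply (rule pd_via[where g="\<lambda>t. - ((cosh (b*(x$1)) - kapt (x$3) * sinh (b*(x$1))) * (b * (sinh (b*(x$1)) - kapt (x$3) * cosh (b*(x$1)))))"])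
  using assms
  apply (auto intro!: derivative_eq_intros C1.kap_D C1.dkap_D C2.kap_D C2.dkap_D
      simp: A_def At_def Ar_def Atr_def Arr_def B_def Bt_def Bs_def Bts_def Bss_def axis_def)
  apply ((simp_all add: field_simps sqcs)?)
  apply ((simp_all add: algebra_simps sqcs minus_divide_left)?)
  done

lemma pd_g1_3:
  assumes "x \<in> W"
  shows "pd 3 (\<lambda>y. - (B y * Bt y)) x = - (Bs x * Bt x + B x * Bts x)"
  apply (rule pd_via[where g="\<lambda>t. - ((cosh (b*(x$1)) - kapt t * sinh (b*(x$1))) * (b * (sinh (b*(x$1)) - kapt t * cosh (b*(x$1)))))"])
  using assms
  apply (auto intro!: derivative_eq_intros C1.kap_D C1.dkap_D C2.kap_D C2.dkap_D
      simp: A_def At_def Ar_def Atr_def Arr_def B_def Bt_def Bs_def Bts_def Bss_def axis_def)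
  apply ((simp_all add: field_simps sqcs)?)
  apply ((simp_all add: algebra_simps sqcs minus_divide_left)?)
  done

lemma pd_g2_1:
  assumes "x \<in> W" and "B x \<noteq> 0"
  shows "pd 1 (\<lambda>y. Bt y / B y) x = ((1 - c) * B x * B x - Bt x * Bt x) / (B x * B x)"
  apply (rule pd_via[where g="\<lambda>t. (b * (sinh (b*t) - kapt (x$3) * cosh (b*t))) / (cosh (b*t) - kapt (x$3) * sinh (b*t))"])
  using assms
  apply (auto intro!: derivative_eq_intros C1.kap_D C1.dkap_D C2.kap_D C2.dkap_D
      simp: A_def At_def Ar_def Atr_def Arr_def B_def Bt_def Bs_def Bts_def Bss_def axis_def)
  apply ((simp_all add: field_simps sqcs)?)
  apply ((simp_all add: algebra_simps sqcs minus_divide_left)?)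
  done

lemma pd_g2_2:
  assumes "x \<in> W" and "B x \<noteq> 0"
  shows "pd 2 (\<lambda>y. Bt y / B y) x = 0"
  apply (rule pd_via[where g="\<lambda>t. (b * (sinh (b*(x$1)) - kapt (x$3) * cosh (b*(x$1)))) / (cosh (b*(x$1)) - kapt (x$3) * sinh (b*(x$1)))"])
  using assms
  apply (auto intro!: derivative_eq_intros C1.kap_D C1.dkap_D C2.kap_D C2.dkap_D
      simp: A_def At_def Ar_def Atr_def Arr_def B_def Bt_def Bs_def Bts_def Bss_def axis_def)
  apply ((simp_all add: field_simps sqcs)?)
  apply ((simp_all add: algebra_simps sqcs minus_divide_left)?)
  done

lemma pd_g2_3:
  assumes "x \<in> W" and "B x \<noteq> 0"
  shows "pd 3 (\<lambda>y. Bt y / B y) x = (Bts x * B x - Bt x * Bs x) / (B x * B x)"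
  apply (rule pd_via[where g="\<lambda>t. (b * (sinh (b*(x$1)) - kapt t * cosh (b*(x$1)))) / (cosh (b*(x$1)) - kapt t * sinh (b*(x$1)))"])
  using assms
  apply (auto intro!: derivative_eq_intros C1.kap_D C1.dkap_D C2.kap_D C2.dkap_D
      simp: A_def At_def Ar_def Atr_def Arr_def B_def Bt_def Bs_def Bts_def Bss_def axis_def)
  apply ((simp_all add: field_simps sqcs)?)
  apply ((simp_all add: algebra_simps sqcs minus_divide_left)?)
  done

lemma pd_g3_1:
  assumes "x \<in> W" and "B x \<noteq> 0"
  shows "pd 1 (\<lambda>y. Bs y / B y) x = (Bts x * B x - Bs x * Bt x) / (B x * B x)"
  apply (rule pd_via[where g="\<lambda>t. (- deriv kapt (x$3) * sinh (b*t)) / (cosh (b*t) - kapt (x$3) * sinh (b*t))"])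
  using assms
  apply (auto intro!: derivative_eq_intros C1.kap_D C1.dkap_D C2.kap_D C2.dkap_D
      simp: A_def At_def Ar_def Atr_def Arr_def B_def Bt_def Bs_def Bts_def Bss_def axis_def)
  apply ((simp_all add: field_simps sqcs)?)
  apply ((simp_all add: algebra_simps sqcs minus_divide_left)?)
  done

lemma pd_g3_2:
  assumes "x \<in> W" and "B x \<noteq> 0"
  shows "pd 2 (\<lambda>y. Bs y / B y) x = 0"
  apply (rule pd_via[where g="\<lambda>t. (- deriv kapt (x$3) * sinh (b*(x$1))) / (cosh (b*(x$1)) - kapt (x$3) * sinh (b*(x$1)))"])
  using assms
  apply (auto intro!: derivative_eq_intros C1.kap_D C1.dkap_D C2.kap_D C2.dkap_D
      simp: A_def At_def Ar_def Atr_def Arr_def B_def Bt_def Bs_def Bts_def Bss_def axis_def)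
  apply ((simp_all add: field_simps sqcs)?)
  apply ((simp_all add: algebra_simps sqcs minus_divide_left)?)
  done

lemma pd_g3_3:
  assumes "x \<in> W" and "B x \<noteq> 0"
  shows "pd 3 (\<lambda>y. Bs y / B y) x = (Bss x * B x - Bs x * Bs x) / (B x * B x)"
  apply (rule pd_via[where g="\<lambda>t. (- deriv kapt t * sinh (b*(x$1))) / (cosh (b*(x$1)) - kapt t * sinh (b*(x$1)))"])
  using assms
  apply (auto intro!: derivative_eq_intros C1.kap_D C1.dkap_D C2.kap_D C2.dkap_D
      simp: A_def At_def Ar_def Atr_def Arr_def B_def Bt_def Bs_def Bts_def Bss_def axis_def)
  apply ((simp_all add: field_simps sqcs)?)
  apply ((simp_all add: algebra_simps sqcs minus_divide_left)?)
  done

lemmas pd_closed = pd_Asq_1 pd_Asq_2 pd_Asq_3 pd_Bsq_1 pd_Bsq_2 pd_Bsq_3 pd_f1_1 pd_f1_2 pd_f1_3 pd_f2_1 pd_f2_2 pd_f2_3 pd_f3_1 pd_f3_2 pd_f3_3 pd_g1_1 pd_g1_2 pd_g1_3 pd_g2_1 pd_g2_2 pd_g2_3 pd_g3_1 pd_g3_2 pd_g3_3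

end

lemma matrix_inv_unique:
  fixes M :: "real^'n^'n"
  assumes "M ** D = mat 1" "D ** M = mat 1"
  shows "matrix_inv M = D"
  unfolding matrix_inv_def
proof (rule some_equality)
  fix E :: "real^'n^'n" assume E: "M ** E = mat 1 \<and> E ** M = mat 1"
  have "E = E ** (M ** D)" using assms by simp
  also have "\<dots> = (E ** M) ** D" by (simp add: matrix_mul_assoc)
  also have "\<dots> = D" using E by simp
  finally show "E = D" .
qed (use assms in auto)

lemma matrix_inv_diag:
  fixes d :: "'n::finite \<Rightarrow> real"
  assumes "\<And>i. d i \<noteq> 0"
  shows "matrix_inv (\<chi> i j. if i = j then d i else 0) = (\<chi> i j. if i = j then 1 / d i else 0)"
  by (rule matrix_inv_unique)
     (auto simp: matrix_matrix_mult_def mat_def vec_eq_iff if_distrib[of "\<lambda>z. _ * z"] assms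
       sum.delta cong: if_cong)

context setting begin

definition "Mx (i::3) (j::3) = (if i = j then (if i = 1 then (\<lambda>y. 1) else if i = 2 then (\<lambda>y. (A y)^2) else (\<lambda>y. (B y)^2)) else (\<lambda>y. 0))"

lemma metric_W: assumes y: "y \<in> W" shows "metric F y i j = Mx i j y"
proof -
  have r: "y$2 \<in> I" and s: "y$3 \<in> J" using y by auto
  have L0: "lor (gam (y$2)) (N (y$2)) = 0" "lor (T1 (y$2)) (N (y$2)) = 0" "lor (T1 (y$2)) (gam (y$2)) = 0"
    "lor (gamt (y$3)) (Nt (y$3)) = 0" "lor (T2 (y$3)) (Nt (y$3)) = 0" "lor (T2 (y$3)) (gamt (y$3)) = 0"
    using C1.lor_facts[OF r] C2.lor_facts[OF s] by (simp_all add: lor_sym)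
  note L = C1.lor_facts[OF r] C2.lor_facts[OF s] L0
  have h1: "cosh z * cosh z = 1 + sinh z * sinh z" for z :: real
    using hyperbolic_pythagoras[of z] by (simp add: power2_eq_square)
  have m11: "metric F y 1 1 = 1"
    unfolding metric_def ip6_def pdF1[OF r s]
    by (simp add: L algebra_simps sqcs h1)
  show ?thesis
    using exhaust_3[of i] exhaust_3[of j]
    by (elim disjE) (simp_all add: Mx_def metric_def ip6_def pdF1[OF r s] pdF2[OF r s] pdF3[OF r s] L
         algebra_simps sqcs h1 power2_eq_square m11[unfolded metric_def ip6_def pdF1[OF r s]])
qed

lemma UW': "x \<in> U \<Longrightarrow> x \<in> W" using UW by auto

lemma A_nz: assumes x: "x \<in> U" shows "A x \<noteq> 0"
proof -
  have "axis 2 (1::real) \<noteq> (0::real^3)" by (simp add: axis_eq_0_iff)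
  then have "gform F x (axis 2 1) (axis 2 1) > 0" using imm x unfolding immersion_on_def by blast
  then show ?thesis using metric_W[OF UW'[OF x]] by (simp add: gform_def sum_3 axis_def Mx_def)
qed

lemma B_nz: assumes x: "x \<in> U" shows "B x \<noteq> 0"
proof -
  have "axis 3 (1::real) \<noteq> (0::real^3)" by (simp add: axis_eq_0_iff)
  then have "gform F x (axis 3 1) (axis 3 1) > 0" using imm x unfolding immersion_on_def by blast
  then show ?thesis using metric_W[OF UW'[OF x]] by (simp add: gform_def sum_3 axis_def Mx_def)
qed

lemma ginv_U: assumes x: "x \<in> U"
  shows "ginv F x i j = (if i = j then 1 / Mx i i x else 0)"
proof -
  have "(\<chi> a b. metric F x a b) = (\<chi> a b. if a = b then Mx a a x else 0)"
    using metric_W[OF UW'[OF x]] by (simp add: vec_eq_iff Mx_def)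
  moreover have "\<And>a. Mx a a x \<noteq> 0" using A_nz[OF x] B_nz[OF x] by (simp add: Mx_def)
  ultimately show ?thesis unfolding ginv_def by (simp add: matrix_inv_diag)
qed

lemma pd_metric_U: "x \<in> U \<Longrightarrow> pd i (\<lambda>y. metric F y j l) x = pd i (Mx j l) x"
  by (rule pd_local[OF openU]) (auto simp: metric_W[OF UW'])

definition "Ch (k::3) (i::3) (j::3) =
  (if k = 1 then (if i = 2 \<and> j = 2 then (\<lambda>y. - (A y * At y)) else if i = 3 \<and> j = 3 then (\<lambda>y. - (B y * Bt y)) else (\<lambda>y. 0))
   else if k = 2 then (if (i = 1 \<and> j = 2) \<or> (i = 2 \<and> j = 1) then (\<lambda>y. At y / A y) else if i = 2 \<and> j = 2 then (\<lambda>y. Ar y / A y) else (\<lambda>y. 0))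
   else (if (i = 1 \<and> j = 3) \<or> (i = 3 \<and> j = 1) then (\<lambda>y. Bt y / B y) else if i = 3 \<and> j = 3 then (\<lambda>y. Bs y / B y) else (\<lambda>y. 0)))"

lemma christ_gen: assumes x: "x \<in> U"
  shows "christ F x k i j = (pd i (Mx j k) x + pd j (Mx i k) x - pd k (Mx i j) x) / (2 * Mx k k x)"
  using exhaust_3[of k]
  by (elim disjE) (simp_all add: christ_def sum_3 ginv_U[OF x] pd_metric_U[OF x])

lemma christ_U: assumes x: "x \<in> U" shows "christ F x k i j = Ch k i j x"
proof -
  have W: "x \<in> W" using UW'[OF x] .
  note nz = A_nz[OF x] B_nz[OF x]
  show ?thesis
    unfolding christ_gen[OF x]
    using exhaust_3[of i] exhaust_3[of j] exhaust_3[of k]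
    apply (elim disjE) apply (simp_all add: Mx_def pd_closed[OF W] pd_const Ch_def nz)
    by (simp_all add: power2_eq_square nz)
qed

lemma pd_christ_U: "x \<in> U \<Longrightarrow> pd i (\<lambda>y. christ F y l j k) x = pd i (Ch l j k) x"
  by (rule pd_local[OF openU]) (auto simp: christ_U)

end

lemma coord_const:
  fixes U :: "(real^'n) set" and f :: "real \<Rightarrow> 'b"
  assumes U: "open U" "connected U" "x0 \<in> U"
  and H: "\<And>x y. x \<in> U \<Longrightarrow> y \<in> U \<Longrightarrow> (\<And>j. j \<noteq> i \<Longrightarrow> x$j = y$j) \<Longrightarrow> f (x$i) = f (y$i)"
  shows "\<forall>x\<in>U. f (x$i) = f (x0$i)"
proof
  fix x assume x: "x \<in> U"
  have "(\<lambda>z. f (z$i)) x0 = (\<lambda>z. f (z$i)) x"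
  proof (rule connected_local_const[OF U(2) U(3) x], rule ballI)
    fix a assume a: "a \<in> U"
    obtain e where e: "e > 0" "ball a e \<subseteq> U" using U(1) a openE by blast
    show "\<forall>\<^sub>F b in at a within U. f (a$i) = f (b$i)"
      unfolding eventually_at
    proof (intro exI[of _ e] conjI ballI impI)
      fix y assume y: "y \<in> U" "y \<noteq> a \<and> dist y a < e"
      define z where "z = a + (y$i - a$i) *\<^sub>R axis i (1::real)"
      have "dist z a = \<bar>y$i - a$i\<bar>" by (simp add: z_def dist_norm)
      also have "\<dots> \<le> dist y a" using dist_vec_nth_le[of y i a] by (simp add: dist_real_def)
      finally have "z \<in> U" using y e by (auto simp: dist_commute subset_iff)
      have zi: "z$i = y$i" and zj: "\<And>j. j \<noteq> i \<Longrightarrow> z$j = a$j" by (simp_all add: z_def axis_def)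
      show "f (a$i) = f (y$i)" using H[OF a \<open>z \<in> U\<close>] zj zi by metis
    qed (rule e)
  qed
  then show "f (x$i) = f (x0$i)" by simp
qed

lemma deriv_coord_const:
  fixes U :: "(real^'n) set" and f :: "real \<Rightarrow> real"
  assumes U: "open U" "x \<in> U" and H: "\<forall>y\<in>U. f (y$i) = k"
  shows "deriv f (x$i) = 0"
proof -
  let ?S = "(\<lambda>r. x + (r - x$i) *\<^sub>R axis i (1::real)) -` U"
  have cS: "continuous_on UNIV (\<lambda>r. x + (r - x$i) *\<^sub>R axis i (1::real))" by (intro continuous_intros)
  have oS: "open ?S" using open_vimage[OF U(1) cS] by simp
  have xS: "x$i \<in> ?S" using U by simp
  have eqS: "\<And>r. r \<in> ?S \<Longrightarrow> k = f r"
  proof -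
    fix r assume "r \<in> ?S"
    then have "x + (r - x$i) *\<^sub>R axis i (1::real) \<in> U" by simp
    from H[rule_format, OF this] show "k = f r" by (simp add: axis_def)
  qed
  have d0: "((\<lambda>_. k) has_real_derivative 0) (at (x$i))" by simp
  have "(f has_real_derivative 0) (at (x$i))"
    by (rule has_field_derivative_transform_within_open[OF d0 oS xS]) (rule eqS)
  then show ?thesis by (rule DERIV_imp_deriv)
qed

lemma km_identity: "(k::real) * m = 1 \<Longrightarrow> (s - k * h) * (s - m * h) = (h - k * s) * (h - m * s)"
proof -
  assume km: "k * m = 1"
  have "(s - k * h) * (s - m * h) - (h - k * s) * (h - m * s) = (k * m - 1) * (h * h - s * s)"
    by (simp add: algebra_simps)
  with km show ?thesis by simp
qed
lemma sum_if_const: "(\<Sum>j\<in>S. if P then g j else 0) = (if P then sum g S else 0)"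
  by simp

lemma quad_id:
  fixes X Y :: "real^3" and d :: "3 \<Rightarrow> real" and K :: real
  shows "(\<Sum>i\<in>UNIV. \<Sum>j\<in>UNIV. \<Sum>k\<in>UNIV. \<Sum>l\<in>UNIV. X$i * Y$j * Y$k * X$l *
      (K * ((if i = l then d i else 0) * (if j = k then d j else 0) - (if i = k then d i else 0) * (if j = l then d j else 0))))
   = K * ((\<Sum>i\<in>UNIV. \<Sum>j\<in>UNIV. X$i * X$j * (if i = j then d i else 0)) *
          (\<Sum>i\<in>UNIV. \<Sum>j\<in>UNIV. Y$i * Y$j * (if i = j then d i else 0)) -
          (\<Sum>i\<in>UNIV. \<Sum>j\<in>UNIV. X$i * Y$j * (if i = j then d i else 0))^2)"
  by (simp add: sum_3 algebra_simps power2_eq_square)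

context setting begin

lemma riem_U: assumes x: "x \<in> U" shows "riem F x i j k l = riem_up F x l i j k * Mx l l x"
  using exhaust_3[of l]
  by (elim disjE) (simp_all add: riem_def sum_3 metric_W[OF UW'[OF x]] Mx_def)

lemma riem_up_U: assumes x: "x \<in> U"
  shows "riem_up F x l i j k = pd i (Ch l j k) x - pd j (Ch l i k) x +
     (\<Sum>m\<in>UNIV. Ch m j k x * Ch l i m x - Ch m i k x * Ch l j m x)"
  by (simp add: riem_up_def pd_christ_U[OF x] christ_U[OF x])

lemma R1221: assumes x: "x \<in> U" shows "riem F x 1 2 2 1 = - c * (A x)^2"
proof -
  note W = UW'[OF x] note nz = A_nz[OF x] B_nz[OF x]
  show ?thesis unfolding riem_U[OF x] riem_up_U[OF x] sum_3
    apply (simp add: Ch_def Mx_def)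
    apply (simp add: pd_closed[OF W] pd_const nz)
    apply (simp add: field_simps power2_eq_square)
    done
qed

lemma R1331: assumes x: "x \<in> U" shows "riem F x 1 3 3 1 = - (1 - c) * (B x)^2"
proof -
  note W = UW'[OF x] note nz = A_nz[OF x] B_nz[OF x]
  show ?thesis unfolding riem_U[OF x] riem_up_U[OF x] sum_3
    apply (simp add: Ch_def Mx_def)
    apply (simp add: pd_closed[OF W] pd_const nz)
    apply (simp add: field_simps power2_eq_square)
    done
qed

lemma R2332: assumes x: "x \<in> U" shows "riem F x 2 3 3 2 = - (A x * At x * B x * Bt x)"
proof -
  note W = UW'[OF x] note nz = A_nz[OF x] B_nz[OF x]
  show ?thesis unfolding riem_U[OF x] riem_up_U[OF x] sum_3
    apply (simp add: Ch_def Mx_def)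
    apply (simp add: pd_closed[OF W] pd_const nz)
    apply (simp add: field_simps power2_eq_square)
    done
qed


lemma riem_suff:
  assumes x: "x \<in> U" and ch: "c = 1/2" and k1: "deriv kap (x$2) = 0" and k2: "deriv kapt (x$3) = 0"
    and key: "At x * Bt x = A x * B x / 2"
  shows "riem F x i j k l = - 1/2 * (Mx i l x * Mx j k x - Mx i k x * Mx j l x)"
proof -
  note W = UW'[OF x] note nz = A_nz[OF x] B_nz[OF x]
  have z: "Ar x = 0" "Atr x = 0" "Bs x = 0" "Bts x = 0" using k1 k2 by (simp_all add: Ar_def Atr_def Bs_def Bts_def)
  show ?thesis unfolding riem_U[OF x] riem_up_U[OF x] sum_3
    using exhaust_3[of i] exhaust_3[of j] exhaust_3[of k] exhaust_3[of l]
    apply (elim disjE)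
    apply (simp_all add: Ch_def Mx_def)
    apply (simp_all add: pd_closed[OF W] pd_const nz z)
    apply (simp_all add: field_simps power2_eq_square)
    using nz key by (simp_all add: ch field_simps)
qed


lemma gform_axis: "gform F x (axis p 1) (axis q 1) = metric F x p q"
  by (simp add: gform_def axis_def if_distrib[of "\<lambda>z. z * _"] sum_if_const sum.delta cong: if_cong)

lemma sec_axis: "sec_curv F x (axis p 1) (axis q 1) = riem F x p q q p /
   (metric F x p p * metric F x q q - (metric F x p q)^2)"
  unfolding sec_curv_def gform_axis by (simp add: axis_def if_distrib[of "\<lambda>z. z * _"] sum_if_const sum.delta cong: if_cong)

lemma sec12: "x \<in> U \<Longrightarrow> sec_curv F x (axis 1 1) (axis 2 1) = - c"
  using A_nz[of x] by (simp add: sec_axis R1221 metric_W[OF UW'] Mx_def)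
lemma sec13: "x \<in> U \<Longrightarrow> sec_curv F x (axis 1 1) (axis 3 1) = - (1 - c)"
  using B_nz[of x] by (simp add: sec_axis R1331 metric_W[OF UW'] Mx_def)
lemma sec23: "x \<in> U \<Longrightarrow> sec_curv F x (axis 2 1) (axis 3 1) = - (At x * Bt x) / (A x * B x)"
  using A_nz[of x] B_nz[of x] by (simp add: sec_axis R2332 metric_W[OF UW'] Mx_def power2_eq_square)

lemma den_axis: "x \<in> U \<Longrightarrow> p \<noteq> q \<Longrightarrow>
   gform F x (axis p 1) (axis p 1) * gform F x (axis q 1) (axis q 1) - (gform F x (axis p 1) (axis q 1))^2 \<noteq> 0"
  using A_nz[of x] B_nz[of x] exhaust_3[of p] exhaust_3[of q]
  by (auto simp: gform_axis metric_W[OF UW'] Mx_def)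

lemma sec_suff:
  assumes ch: "c = 1/2" and k: "\<forall>x\<in>U. kap (x$2) = k" and kt: "\<forall>x\<in>U. kapt (x$3) = kt" and kk: "k * kt = 1"
  shows "const_sec_curv F U (-1/2)"
  unfolding const_sec_curv_def
proof (intro ballI allI impI)
  fix x X Y assume x: "x \<in> U" and den: "gform F x X X * gform F x Y Y - (gform F x X Y)^2 \<noteq> 0"
  have k1: "deriv kap (x$2) = 0" by (rule deriv_coord_const[OF openU x k])
  have k2: "deriv kapt (x$3) = 0" by (rule deriv_coord_const[OF openU x kt])
  have key: "At x * Bt x = A x * B x / 2"
  proof -
    have km: "kap (x$2) * kapt (x$3) = 1" using k kt kk x by simp
    have bq: "sqrt (1 - c) = sqrt c" using ch by simp
    note e = km_identity[OF km, of "sinh (sqrt c * x$1)" "cosh (sqrt c * x$1)"]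
    have "At x * Bt x = (sqrt c * sqrt c) * ((sinh (sqrt c * x$1) - kap (x$2) * cosh (sqrt c * x$1)) *
        (sinh (sqrt c * x$1) - kapt (x$3) * cosh (sqrt c * x$1)))"
      unfolding At_def Bt_def bq by (simp only: mult_ac)
    also have "\<dots> = c * ((cosh (sqrt c * x$1) - kap (x$2) * sinh (sqrt c * x$1)) *
        (cosh (sqrt c * x$1) - kapt (x$3) * sinh (sqrt c * x$1)))" by (simp only: sqcs(1) e)
    also have "\<dots> = A x * B x / 2" unfolding A_def B_def bq by (simp add: ch)
    finally show ?thesis .
  qed
  note R = riem_suff[OF x ch k1 k2 key]
  have "(\<Sum>i\<in>UNIV. \<Sum>j\<in>UNIV. \<Sum>k\<in>UNIV. \<Sum>l\<in>UNIV. X$i * Y$j * Y$k * X$l * riem F x i j k l)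
        = -1/2 * (gform F x X X * gform F x Y Y - (gform F x X Y)^2)"
  proof -
    define d where "d = (\<lambda>i. Mx i i x)"
    have md: "\<And>i j. Mx i j x = (if i = j then d i else 0)" by (simp add: d_def Mx_def)
    show ?thesis unfolding R gform_def metric_W[OF UW'[OF x]] md by (rule quad_id)
  qed
  then show "sec_curv F x X Y = -1/2" using den by (simp add: sec_curv_def)
qed

end

lemma zero_on_open_deriv:
  assumes S: "open S" "t \<in> S" and Z: "\<forall>s\<in>S. f s = (0::real)" and D: "(f has_real_derivative D) (at t)"
  shows "D = 0"
proof -
  have d0: "((\<lambda>_. 0) has_real_derivative 0) (at t)" by simp
  have "(f has_real_derivative 0) (at t)"
    by (rule has_field_derivative_transform_within_open[OF d0 S]) (use Z in auto)
  with D show ?thesis using DERIV_unique by blast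
qed

lemma ch_sh_1: "cosh (z::real) * cosh z - sinh z * sinh z = 1"
  using hyperbolic_pythagoras[of z] by (simp add: power2_eq_square)

lemma hyp_indep:
  fixes l m al be ga de t0 :: real
  assumes S: "open S" "t0 \<in> S" and lm: "l \<noteq> 0" "m \<noteq> 0" "l * l \<noteq> m * m"
    and Z: "\<forall>t\<in>S. al * cosh (l*t) + be * sinh (l*t) + ga * cosh (m*t) + de * sinh (m*t) = 0"
  shows "al = 0 \<and> be = 0 \<and> ga = 0 \<and> de = 0"
proof -
  define G0 where "G0 t = al * cosh (l*t) + be * sinh (l*t) + ga * cosh (m*t) + de * sinh (m*t)" for t
  define G1 where "G1 t = l * (al * sinh (l*t) + be * cosh (l*t)) + m * (ga * sinh (m*t) + de * cosh (m*t))" for t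
  define G2 where "G2 t = l*l * (al * cosh (l*t) + be * sinh (l*t)) + m*m * (ga * cosh (m*t) + de * sinh (m*t))" for t
  define G3 where "G3 t = l*l*l * (al * sinh (l*t) + be * cosh (l*t)) + m*m*m * (ga * sinh (m*t) + de * cosh (m*t))" for t
  have D01: "(G0 has_real_derivative G1 t) (at t)" for t
    unfolding G0_def[abs_def] G1_def by (auto intro!: derivative_eq_intros simp: algebra_simps)
  have D12: "(G1 has_real_derivative G2 t) (at t)" for t
    unfolding G1_def[abs_def] G2_def by (auto intro!: derivative_eq_intros simp: algebra_simps)
  have D23: "(G2 has_real_derivative G3 t) (at t)" for t
    unfolding G2_def[abs_def] G3_def by (auto intro!: derivative_eq_intros simp: algebra_simps)
  have Z0: "\<forall>t\<in>S. G0 t = 0" using Z by (simp add: G0_def)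
  have Z1: "\<forall>t\<in>S. G1 t = 0" using zero_on_open_deriv[OF S(1) _ Z0 D01] by blast
  have Z2: "\<forall>t\<in>S. G2 t = 0" using zero_on_open_deriv[OF S(1) _ Z1 D12] by blast
  have Z3: "\<forall>t\<in>S. G3 t = 0" using zero_on_open_deriv[OF S(1) _ Z2 D23] by blast
  define P where "P = al * cosh (l*t0) + be * sinh (l*t0)"
  define P' where "P' = al * sinh (l*t0) + be * cosh (l*t0)"
  define Q where "Q = ga * cosh (m*t0) + de * sinh (m*t0)"
  define Q' where "Q' = ga * sinh (m*t0) + de * cosh (m*t0)"
  have e0: "P + Q = 0" using bspec[OF Z0 S(2)] by (simp add: G0_def P_def Q_def algebra_simps)
  have e1: "l * P' + m * Q' = 0" using bspec[OF Z1 S(2)] by (simp add: G1_def P'_def Q'_def)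
  have e2: "l*l * P + m*m * Q = 0" using bspec[OF Z2 S(2)] by (simp add: G2_def P_def Q_def)
  have e3: "l*l*l * P' + m*m*m * Q' = 0" using bspec[OF Z3 S(2)] by (simp add: G3_def P'_def Q'_def)
  have "(l*l - m*m) * P = (l*l * P + m*m * Q) - m*m * (P + Q)" by (simp add: algebra_simps)
  then have "(l*l - m*m) * P = 0" using e0 e2 by simp
  then have P0: "P = 0" using lm by simp
  then have Q0: "Q = 0" using e0 by simp
  have "l * (l*l - m*m) * P' = 0"
  proof -
    have "l * (l*l - m*m) * P' = (l*l*l * P' + m*m*m * Q') - m*m * (l * P' + m * Q')" by (simp add: algebra_simps)
    then show ?thesis using e1 e3 by simp
  qed
  then have P'0: "P' = 0" using lm by simp
  then have Q'0: "Q' = 0" using e1 lm by simp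
  have "cosh (l*t0) * P - sinh (l*t0) * P' = al * (cosh (l*t0) * cosh (l*t0) - sinh (l*t0) * sinh (l*t0))"
    unfolding P_def P'_def by (simp add: algebra_simps)
  moreover have "cosh (l*t0) * P' - sinh (l*t0) * P = be * (cosh (l*t0) * cosh (l*t0) - sinh (l*t0) * sinh (l*t0))"
    unfolding P_def P'_def by (simp add: algebra_simps)
  moreover have "cosh (m*t0) * Q - sinh (m*t0) * Q' = ga * (cosh (m*t0) * cosh (m*t0) - sinh (m*t0) * sinh (m*t0))"
    unfolding Q_def Q'_def by (simp add: algebra_simps)
  moreover have "cosh (m*t0) * Q' - sinh (m*t0) * Q = de * (cosh (m*t0) * cosh (m*t0) - sinh (m*t0) * sinh (m*t0))"
    unfolding Q_def Q'_def by (simp add: algebra_simps)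
  ultimately show ?thesis using P0 Q0 P'0 Q'0 by (simp add: ch_sh_1)
qed


lemma G_decomp:
  fixes a b t k m :: real
  shows "b * (k * cosh (a*t) - sinh (a*t)) * (cosh (b*t) - m * sinh (b*t))
       - a * (m * cosh (b*t) - sinh (b*t)) * (cosh (a*t) - k * sinh (a*t))
     = (b - a) * (k + m) / 2 * cosh ((a + b) * t) + (a - b) * (1 + k * m) / 2 * sinh ((a + b) * t)
       + (a + b) * (k - m) / 2 * cosh ((a - b) * t) + (a + b) * (k * m - 1) / 2 * sinh ((a - b) * t)"
  unfolding distrib_right left_diff_distrib cosh_add sinh_add cosh_diff sinh_diff
  by (simp add: algebra_simps divide_simps)

lemma alg_gn: "C*C - S*S = (1::real) \<Longrightarrow> C*g + S*n = 0 \<Longrightarrow> g + k*n = (k*C - S)*(S*g + C*n)"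
proof -
  assume h: "C*C - S*S = 1" "C*g + S*n = 0"
  have "(k*C - S)*(S*g + C*n) - (g + k*n) = (k*S - C)*(C*g + S*n) + (g + k*n)*(C*C - S*S - 1)"
    by (simp add: algebra_simps)
  with h show ?thesis by simp
qed

lemma pd_via_vec:
  assumes "(g has_vector_derivative D) (at (x$i))" and "\<And>h. f (x + h *\<^sub>R axis i 1) = g (x$i + h)"
  shows "pd i f x = D"
  using shift_vd[OF assms(1)] by (intro pd_eq) (simp add: assms(2))

context setting begin

lemma pdpdF1: assumes x: "x \<in> U"
  shows "pd 1 (pd 1 F) x = ((a * a) *\<^sub>R (cosh (a * x$1) *\<^sub>R gam (x$2) + sinh (a * x$1) *\<^sub>R N (x$2)),
                            (b * b) *\<^sub>R (cosh (b * x$1) *\<^sub>R gamt (x$3) + sinh (b * x$1) *\<^sub>R Nt (x$3)))"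
proof -
  have "pd 1 (pd 1 F) x = pd 1 (\<lambda>y. (a *\<^sub>R (sinh (a * y$1) *\<^sub>R gam (y$2) + cosh (a * y$1) *\<^sub>R N (y$2)),
    b *\<^sub>R (sinh (b * y$1) *\<^sub>R gamt (y$3) + cosh (b * y$1) *\<^sub>R Nt (y$3)))) x"
    by (rule pd_local[OF openU x]) (use UW in \<open>auto intro!: pdF1\<close>)
  also have "\<dots> = ((a * a) *\<^sub>R (cosh (a * x$1) *\<^sub>R gam (x$2) + sinh (a * x$1) *\<^sub>R N (x$2)),
                            (b * b) *\<^sub>R (cosh (b * x$1) *\<^sub>R gamt (x$3) + sinh (b * x$1) *\<^sub>R Nt (x$3)))"
    apply (rule pd_via_vec[where g="\<lambda>t. (a *\<^sub>R (sinh (a * t) *\<^sub>R gam (x$2) + cosh (a * t) *\<^sub>R N (x$2)),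
    b *\<^sub>R (sinh (b * t) *\<^sub>R gamt (x$3) + cosh (b * t) *\<^sub>R Nt (x$3)))"])
     apply (rule derivative_eq_intros refl | simp)+
     apply (simp add: scaleR_add_right algebra_simps sqcs)
    apply (simp add: axis_def)
    done
  finally show ?thesis .
qed

lemma pdpdF2: assumes x: "x \<in> U"
  shows "pd 2 (pd 2 F) x = (Ar x *\<^sub>R T1 (x$2) + A x *\<^sub>R (gam (x$2) + kap (x$2) *\<^sub>R N (x$2)), 0)"
proof -
  have r: "x$2 \<in> I" using UW x by auto
  have "pd 2 (pd 2 F) x = pd 2 (\<lambda>y. (A y *\<^sub>R T1 (y$2), 0)) x"
    by (rule pd_local[OF openU x]) (use UW in \<open>auto intro!: pdF2\<close>)
  also have "\<dots> = (Ar x *\<^sub>R T1 (x$2) + A x *\<^sub>R (gam (x$2) + kap (x$2) *\<^sub>R N (x$2)), 0)"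
    apply (rule pd_via_vec[where g="\<lambda>r. ((cosh (a * x$1) - kap r * sinh (a * x$1)) *\<^sub>R T1 r, 0)"])
     apply (rule derivative_eq_intros refl C1.kap_D C1.T_D r | simp)+
     apply (simp add: A_def Ar_def algebra_simps)
    apply (simp add: axis_def A_def)
    done
  finally show ?thesis .
qed

lemma pdpdF3: assumes x: "x \<in> U"
  shows "pd 3 (pd 3 F) x = (0, Bs x *\<^sub>R T2 (x$3) + B x *\<^sub>R (gamt (x$3) + kapt (x$3) *\<^sub>R Nt (x$3)))"
proof -
  have s: "x$3 \<in> J" using UW x by auto
  have "pd 3 (pd 3 F) x = pd 3 (\<lambda>y. (0, B y *\<^sub>R T2 (y$3))) x"
    by (rule pd_local[OF openU x]) (use UW in \<open>auto intro!: pdF3\<close>)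
  also have "\<dots> = (0, Bs x *\<^sub>R T2 (x$3) + B x *\<^sub>R (gamt (x$3) + kapt (x$3) *\<^sub>R Nt (x$3)))"
    apply (rule pd_via_vec[where g="\<lambda>r. (0, (cosh (b * x$1) - kapt r * sinh (b * x$1)) *\<^sub>R T2 r)"])
     apply (rule derivative_eq_intros refl C2.kap_D C2.T_D s | simp)+
     apply (simp add: B_def Bs_def algebra_simps)
    apply (simp add: axis_def B_def)
    done
  finally show ?thesis .
qed


abbreviation "q1 x \<equiv> sinh (a * x$1) *\<^sub>R gam (x$2) + cosh (a * x$1) *\<^sub>R N (x$2)"
abbreviation "q2 x \<equiv> sinh (b * x$1) *\<^sub>R gamt (x$3) + cosh (b * x$1) *\<^sub>R Nt (x$3)"

lemma mean_U: assumes x: "x \<in> U" and un: "unit_normal F x xi"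
  shows "mean_curv F x xi = 1/3 * ((kap (x$2) * cosh (a * x$1) - sinh (a * x$1)) * lor (q1 x) (fst xi) / A x
                               + (kapt (x$3) * cosh (b * x$1) - sinh (b * x$1)) * lor (q2 x) (snd xi) / B x)"
    and "a * lor (q1 x) (fst xi) + b * lor (q2 x) (snd xi) = 0"
proof -
  have r: "x$2 \<in> I" and s: "x$3 \<in> J" using x UW by auto
  note nz = A_nz[OF x] B_nz[OF x]
  obtain xi1 xi2 where xi: "xi = (xi1, xi2)" by (cases xi)
  have n1: "cosh (a * x$1) * lor (gam (x$2)) xi1 + sinh (a * x$1) * lor (N (x$2)) xi1 = 0"
    using un by (simp add: unit_normal_def xi Fmap_def)
  have n2: "cosh (b * x$1) * lor (gamt (x$3)) xi2 + sinh (b * x$1) * lor (Nt (x$3)) xi2 = 0"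
    using un by (simp add: unit_normal_def xi Fmap_def)
  have o1: "ip6 (pd 1 F x) xi = 0" and o2: "ip6 (pd 2 F x) xi = 0" and o3: "ip6 (pd 3 F x) xi = 0"
    using un by (simp_all add: unit_normal_def)
  have T1: "lor (T1 (x$2)) xi1 = 0" using o2 nz by (simp add: pdF2[OF r s] ip6_def xi)
  have T2: "lor (T2 (x$3)) xi2 = 0" using o3 nz by (simp add: pdF3[OF r s] ip6_def xi)
  show "a * lor (q1 x) (fst xi) + b * lor (q2 x) (snd xi) = 0"
    using o1 by (simp add: pdF1[OF r s] ip6_def xi)
  have t1: "ip6 (pd 1 (pd 1 F) x) xi = 0"
    using n1 n2 by (simp add: pdpdF1[OF x] ip6_def xi)
  have t2: "ip6 (pd 2 (pd 2 F) x) xi = A x * ((kap (x$2) * cosh (a * x$1) - sinh (a * x$1)) * lor (q1 x) xi1)"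
  proof -
    have "ip6 (pd 2 (pd 2 F) x) xi = A x * (lor (gam (x$2)) xi1 + kap (x$2) * lor (N (x$2)) xi1)"
      using T1 by (simp add: pdpdF2[OF x] ip6_def xi algebra_simps)
    also have "\<dots> = A x * ((kap (x$2) * cosh (a * x$1) - sinh (a * x$1)) * lor (q1 x) xi1)"
      using alg_gn[OF ch_sh_1 n1, of "kap (x$2)"] by simp
    finally show ?thesis .
  qed
  have t3: "ip6 (pd 3 (pd 3 F) x) xi = B x * ((kapt (x$3) * cosh (b * x$1) - sinh (b * x$1)) * lor (q2 x) xi2)"
  proof -
    have "ip6 (pd 3 (pd 3 F) x) xi = B x * (lor (gamt (x$3)) xi2 + kapt (x$3) * lor (Nt (x$3)) xi2)"
      using T2 by (simp add: pdpdF3[OF x] ip6_def xi algebra_simps)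
    also have "\<dots> = B x * ((kapt (x$3) * cosh (b * x$1) - sinh (b * x$1)) * lor (q2 x) xi2)"
      using alg_gn[OF ch_sh_1 n2, of "kapt (x$3)"] by simp
    finally show ?thesis .
  qed
  show "mean_curv F x xi = 1/3 * ((kap (x$2) * cosh (a * x$1) - sinh (a * x$1)) * lor (q1 x) (fst xi) / A x
                               + (kapt (x$3) * cosh (b * x$1) - sinh (b * x$1)) * lor (q2 x) (snd xi) / B x)"
  proof -
    have m: "mean_curv F x xi = 1/3 * (ip6 (pd 1 (pd 1 F) x) xi + ip6 (pd 2 (pd 2 F) x) xi / (A x)^2
       + ip6 (pd 3 (pd 3 F) x) xi / (B x)^2)"
      unfolding mean_curv_def sum_3 ginv_U[OF x] by (simp add: Mx_def)
    have g: "\<And>P Q X Y::real. P \<noteq> 0 \<Longrightarrow> Q \<noteq> 0 \<Longrightarrow> 1/3 * (0 + P * X / P^2 + Q * Y / Q^2) = 1/3 * (X / P + Y / Q)"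
      by (simp add: power2_eq_square)
    show ?thesis unfolding m t1 t2 t3 g[OF nz] by (simp add: xi mult.assoc)
  qed
qed


lemma xi0_normal: assumes x: "x \<in> U" shows "unit_normal F x (b *\<^sub>R q1 x, - (a *\<^sub>R q2 x))"
proof -
  have r: "x$2 \<in> I" and s: "x$3 \<in> J" using x UW by auto
  have L0: "lor (gam (x$2)) (N (x$2)) = 0" "lor (T1 (x$2)) (N (x$2)) = 0" "lor (T1 (x$2)) (gam (x$2)) = 0"
    "lor (gamt (x$3)) (Nt (x$3)) = 0" "lor (T2 (x$3)) (Nt (x$3)) = 0" "lor (T2 (x$3)) (gamt (x$3)) = 0"
    using C1.lor_facts[OF r] C2.lor_facts[OF s] by (simp_all add: lor_sym)
  note L = C1.lor_facts[OF r] C2.lor_facts[OF s] L0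
  have h1: "cosh z * cosh z = 1 + sinh z * sinh z" for z :: real
    using ch_sh_1[of z] by simp
  have q11: "lor (q1 x) (q1 x) = 1" by (simp add: L algebra_simps h1)
  have q22: "lor (q2 x) (q2 x) = 1" by (simp add: L algebra_simps h1)
  show ?thesis unfolding unit_normal_def forall_3
    by (simp add: Fmap_def pdF1[OF r s] pdF2[OF r s] pdF3[OF r s] ip6_def L q11 q22 algebra_simps sqcs h1)
qed

lemma min_G: assumes x: "x \<in> U" and m: "minimal_on F U"
  shows "b * (kap (x$2) * cosh (a * x$1) - sinh (a * x$1)) * (cosh (b * x$1) - kapt (x$3) * sinh (b * x$1))
       - a * (kapt (x$3) * cosh (b * x$1) - sinh (b * x$1)) * (cosh (a * x$1) - kap (x$2) * sinh (a * x$1)) = 0"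
proof -
  have r: "x$2 \<in> I" and s: "x$3 \<in> J" using x UW by auto
  note un = xi0_normal[OF x]
  have h1: "cosh z * cosh z = 1 + sinh z * sinh z" for z :: real
    using ch_sh_1[of z] by simp
  have L0: "lor (gam (x$2)) (N (x$2)) = 0" "lor (gamt (x$3)) (Nt (x$3)) = 0"
    using C1.lor_facts[OF r] C2.lor_facts[OF s] by (simp_all add: lor_sym)
  have q11: "lor (q1 x) (q1 x) = 1" by (simp add: C1.lor_facts[OF r] L0 algebra_simps h1)
  have q22: "lor (q2 x) (q2 x) = 1" by (simp add: C2.lor_facts[OF s] L0 algebra_simps h1)
  have "mean_curv F x (b *\<^sub>R q1 x, - (a *\<^sub>R q2 x)) = 0" using m x un by (simp add: minimal_on_def)
  then have "(kap (x$2) * cosh (a * x$1) - sinh (a * x$1)) * b / A x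
           - (kapt (x$3) * cosh (b * x$1) - sinh (b * x$1)) * a / B x = 0"
    unfolding mean_U(1)[OF x un] by (simp add: q11 q22 del: lor_add_left lor_add_right)
  then show ?thesis using A_nz[OF x] B_nz[OF x] by (simp add: A_def B_def field_simps)
qed

end

context setting begin

lemma a_pos: "a > 0" and b_pos: "b > 0" using c0 c1 by auto

lemma min_suff: assumes ch: "c = 1/2" and k: "\<forall>x\<in>U. kap (x$2) = k \<and> kapt (x$3) = k"
  shows "minimal_on F U"
  unfolding minimal_on_def
proof (intro ballI allI impI)
  fix x xi assume x: "x \<in> U" and un: "unit_normal F x xi"
  have bq: "sqrt (1 - c) = sqrt c" using ch by simp
  note mU = mean_U[OF x un]
  have kx: "kap (x$2) = k" "kapt (x$3) = k" using k x by auto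
  have BA: "B x = A x" unfolding A_def B_def bq using kx by simp
  define u1 where "u1 = lor (q1 x) (fst xi)"
  define u2 where "u2 = lor (q2 x) (snd xi)"
  have "a * u1 + b * u2 = 0" using mU(2) unfolding u1_def u2_def .
  then have "a * (u1 + u2) = 0" unfolding bq by (simp add: algebra_simps)
  then have u: "u1 + u2 = 0" using a_pos by simp
  have "mean_curv F x xi = 1/3 * ((kap (x$2) * cosh (a * x$1) - sinh (a * x$1)) * u1 / A x
                               + (kapt (x$3) * cosh (b * x$1) - sinh (b * x$1)) * u2 / B x)"
    using mU(1) unfolding u1_def u2_def .
  also have "\<dots> = 1/3 * ((k * cosh (a * x$1) - sinh (a * x$1)) * u1 / A x
                               + (k * cosh (a * x$1) - sinh (a * x$1)) * u2 / A x)"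
    unfolding BA kx bq ..
  also have "\<dots> = 1/3 * ((k * cosh (a * x$1) - sinh (a * x$1)) * (u1 + u2) / A x)"
    by (simp add: add_divide_distrib distrib_left)
  finally show "mean_curv F x xi = 0" using u by simp
qed

lemma min_nec: assumes m: "minimal_on F U" and conn: "connected U" and x0: "x0 \<in> U"
  shows "c = 1/2 \<and> (\<exists>k. \<forall>x\<in>U. kap (x$2) = k \<and> kapt (x$3) = k)"
proof -
  have ab: "a = b"
  proof (rule ccontr)
    assume ne: "a \<noteq> b"
    let ?S = "(\<lambda>t. x0 + (t - x0$1) *\<^sub>R axis 1 (1::real)) -` U"
    have cS: "continuous_on UNIV (\<lambda>t. x0 + (t - x0$1) *\<^sub>R axis 1 (1::real))" by (intro continuous_intros)
    have oS: "open ?S" using open_vimage[OF openU cS] by simp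
    have xS: "x0$1 \<in> ?S" using x0 by simp
    define k where "k = kap (x0$2)"
    define kt where "kt = kapt (x0$3)"
    have Z: "\<forall>t\<in>?S. (b - a) * (k + kt) / 2 * cosh ((a + b) * t) + (a - b) * (1 + k * kt) / 2 * sinh ((a + b) * t)
       + (a + b) * (k - kt) / 2 * cosh ((a - b) * t) + (a + b) * (k * kt - 1) / 2 * sinh ((a - b) * t) = 0"
    proof
      fix t assume "t \<in> ?S"
      then have y: "x0 + (t - x0$1) *\<^sub>R axis 1 (1::real) \<in> U" by simp
      have c1: "(x0 + (t - x0$1) *\<^sub>R axis 1 (1::real))$1 = t"
        and c2: "(x0 + (t - x0$1) *\<^sub>R axis 1 (1::real))$2 = x0$2"
        and c3: "(x0 + (t - x0$1) *\<^sub>R axis 1 (1::real))$3 = x0$3" by (simp_all add: axis_def)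
      from min_G[OF y m] show "(b - a) * (k + kt) / 2 * cosh ((a + b) * t) + (a - b) * (1 + k * kt) / 2 * sinh ((a + b) * t)
       + (a + b) * (k - kt) / 2 * cosh ((a - b) * t) + (a + b) * (k * kt - 1) / 2 * sinh ((a - b) * t) = 0"
        unfolding c1 c2 c3 G_decomp k_def kt_def .
    qed
    have l0: "a + b \<noteq> 0" using add_pos_pos[OF a_pos b_pos] by linarith
    have m0: "a - b \<noteq> 0" using ne by simp
    have lm: "(a + b) * (a + b) \<noteq> (a - b) * (a - b)"
    proof
      assume "(a + b) * (a + b) = (a - b) * (a - b)"
      then have "4 * (a * b) = 0" by (simp add: algebra_simps)
      then show False using a_pos b_pos by simp
    qed
    from hyp_indep[OF oS xS l0 m0 lm Z]
    have "(a - b) * (1 + k * kt) / 2 = 0" "(a + b) * (k - kt) / 2 = 0" by simp_all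
    then have "1 + k * kt = 0" "k = kt" using l0 m0 by simp_all
    then have "1 + k * k = 0" by simp
    moreover have "k * k \<ge> 0" by simp
    ultimately show False by linarith
  qed
  have ch: "c = 1/2"
  proof -
    have "c = 1 - c" using ab c0 c1 by simp
    then show ?thesis by simp
  qed
  have bq: "sqrt (1 - c) = sqrt c" using ch by simp
  have eqk: "kap (x$2) = kapt (x$3)" if x: "x \<in> U" for x
  proof -
    have "sqrt c * (kap (x$2) - kapt (x$3)) = 0"
      using min_G[OF x m] unfolding bq G_decomp by (simp add: algebra_simps)
    then show ?thesis using a_pos by simp
  qed
  have cst: "\<forall>x\<in>U. kap (x$2) = kap (x0$2)"
  proof (rule coord_const[OF openU conn x0])
    fix x y :: "real^3" assume x: "x \<in> U" and y: "y \<in> U" and j: "\<And>j. j \<noteq> 2 \<Longrightarrow> x$j = y$j"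
    have "x$3 = y$3" using j by simp
    then show "kap (x$2) = kap (y$2)" using eqk[OF x] eqk[OF y] by simp
  qed
  show ?thesis using ch cst eqk by (metis)
qed

lemma sec_nec: assumes cs: "const_sec_curv F U K" and conn: "connected U" and x0: "x0 \<in> U"
  shows "c = 1/2 \<and> K = -1/2 \<and> (\<exists>k kt. k * kt = 1 \<and> (\<forall>x\<in>U. kap (x$2) = k \<and> kapt (x$3) = kt))"
proof -
  have K12: "K = - c" using cs x0 den_axis[OF x0, of 1 2] sec12[OF x0] by (simp add: const_sec_curv_def)
  have K13: "K = - (1 - c)" using cs x0 den_axis[OF x0, of 1 3] sec13[OF x0] by (simp add: const_sec_curv_def)
  have ch: "c = 1/2" using K12 K13 by simp
  have Kv: "K = -1/2" using K12 ch by simp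
  have bq: "sqrt (1 - c) = sqrt c" using ch by simp
  have prod: "kap (x$2) * kapt (x$3) = 1" if x: "x \<in> U" for x
  proof -
    have d: "gform F x (axis 2 1) (axis 2 1) * gform F x (axis 3 1) (axis 3 1) -
        (gform F x (axis 2 1) (axis 3 1))\<^sup>2 \<noteq> 0" using den_axis[OF x, of 2 3] by simp
    have "sec_curv F x (axis 2 1) (axis 3 1) = K"
      using cs x d unfolding const_sec_curv_def by blast
    then have e0: "- (At x * Bt x) / (A x * B x) = -1/2" using sec23[OF x] Kv by metis
    have nz: "A x * B x \<noteq> 0" using A_nz[OF x] B_nz[OF x] by simp
    have gen: "\<And>P Q::real. Q \<noteq> 0 \<Longrightarrow> - P / Q = -1/2 \<Longrightarrow> 2 * P = Q" by (simp add: field_simps)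
    have e: "2 * (At x * Bt x) = A x * B x" by (rule gen[OF nz e0])
    define S where "S = sinh (sqrt c * x$1)"
    define H where "H = cosh (sqrt c * x$1)"
    define k where "k = kap (x$2)"
    define m where "m = kapt (x$3)"
    have "At x * Bt x = (sqrt c * sqrt c) * ((S - k * H) * (S - m * H))"
      unfolding At_def Bt_def bq S_def H_def k_def m_def by (simp only: mult_ac)
    then have "At x * Bt x = c * ((S - k * H) * (S - m * H))" by (simp only: sqcs(1))
    then have "2 * (At x * Bt x) = (2 * c) * ((S - k * H) * (S - m * H))" by simp
    also have "2 * c = 1" using ch by simp
    finally have e2: "2 * (At x * Bt x) = (S - k * H) * (S - m * H)" by simp
    have "A x * B x = (H - k * S) * (H - m * S)"
      unfolding A_def B_def bq S_def H_def k_def m_def by simp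
    then have "(S - k * H) * (S - m * H) = (H - k * S) * (H - m * S)" using e e2 by simp
    then have "(k * m - 1) * (H * H - S * S) = 0" by (simp add: algebra_simps)
    moreover have "H * H - S * S = 1" unfolding H_def S_def by (rule ch_sh_1)
    ultimately show ?thesis unfolding k_def m_def by simp
  qed
  have c2: "\<forall>x\<in>U. kap (x$2) = kap (x0$2)"
  proof (rule coord_const[OF openU conn x0])
    fix x y :: "real^3" assume x: "x \<in> U" and y: "y \<in> U" and j: "\<And>j. j \<noteq> 2 \<Longrightarrow> x$j = y$j"
    have "x$3 = y$3" using j by simp
    then have "kap (x$2) * kapt (x$3) = kap (y$2) * kapt (x$3)" using prod[OF x] prod[OF y] by simp
    moreover have "kapt (x$3) \<noteq> 0" using prod[OF x] by auto
    ultimately show "kap (x$2) = kap (y$2)" by simp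
  qed
  have c3: "\<forall>x\<in>U. kapt (x$3) = kapt (x0$3)"
  proof (rule coord_const[OF openU conn x0])
    fix x y :: "real^3" assume x: "x \<in> U" and y: "y \<in> U" and j: "\<And>j. j \<noteq> 3 \<Longrightarrow> x$j = y$j"
    have "x$2 = y$2" using j by simp
    then have "kap (x$2) * kapt (x$3) = kap (x$2) * kapt (y$3)" using prod[OF x] prod[OF y] by simp
    moreover have "kap (x$2) \<noteq> 0" using prod[OF x] by auto
    ultimately show "kapt (x$3) = kapt (y$3)" by simp
  qed
  show ?thesis using ch Kv c2 c3 prod[OF x0] by blast
qed

end

theorem lemma3p5:
  fixes c :: real and gam N gamt Nt :: "real \<Rightarrow> real^3" and kap kapt :: "real \<Rightarrow> real"
    and I J :: "real set" and U :: "(real^3) set"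
  assumes "0 < c" and "c < 1"
    and "frenet_curve I gam N kap" and "frenet_curve J gamt Nt kapt"
    and "open U" and "connected U" and "U \<noteq> {}"
    and "U \<subseteq> {x. x$2 \<in> I \<and> x$3 \<in> J}"
    and "immersion_on (Fmap c gam N gamt Nt) U"
  shows "(minimal_on (Fmap c gam N gamt Nt) U \<longleftrightarrow>
            c = 1/2 \<and> (\<exists>k. \<forall>x\<in>U. kap (x$2) = k \<and> kapt (x$3) = k))
       \<and> ((\<exists>K. const_sec_curv (Fmap c gam N gamt Nt) U K) \<longleftrightarrow>
            c = 1/2 \<and> (\<exists>k kt. k * kt = 1 \<and> (\<forall>x\<in>U. kap (x$2) = k \<and> kapt (x$3) = kt)))
       \<and> (\<forall>K. const_sec_curv (Fmap c gam N gamt Nt) U K \<longrightarrow> K = -1/2)"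
proof -
  interpret S: setting I gam N kap J gamt Nt kapt c U
    using assms by (simp add: setting_def setting_axioms_def fcurve_def)
  obtain x0 where x0: "x0 \<in> U" using assms(7) by blast
  have P1: "minimal_on (Fmap c gam N gamt Nt) U \<longleftrightarrow>
            c = 1/2 \<and> (\<exists>k. \<forall>x\<in>U. kap (x$2) = k \<and> kapt (x$3) = k)"
    using S.min_nec[OF _ assms(6) x0] S.min_suff by blast
  have P2: "(\<exists>K. const_sec_curv (Fmap c gam N gamt Nt) U K) \<longleftrightarrow>
            c = 1/2 \<and> (\<exists>k kt. k * kt = 1 \<and> (\<forall>x\<in>U. kap (x$2) = k \<and> kapt (x$3) = kt))"
  proof
    assume "\<exists>K. const_sec_curv (Fmap c gam N gamt Nt) U K"
    then show "c = 1/2 \<and> (\<exists>k kt. k * kt = 1 \<and> (\<forall>x\<in>U. kap (x$2) = k \<and> kapt (x$3) = kt))"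
      using S.sec_nec[OF _ assms(6) x0] by blast
  next
    assume h: "c = 1/2 \<and> (\<exists>k kt. k * kt = 1 \<and> (\<forall>x\<in>U. kap (x$2) = k \<and> kapt (x$3) = kt))"
    then obtain k kt where "k * kt = 1" "\<forall>x\<in>U. kap (x$2) = k" "\<forall>x\<in>U. kapt (x$3) = kt" by blast
    then show "\<exists>K. const_sec_curv (Fmap c gam N gamt Nt) U K"
      using S.sec_suff h by blast
  qed
  have P3: "\<forall>K. const_sec_curv (Fmap c gam N gamt Nt) U K \<longrightarrow> K = -1/2"
    using S.sec_nec[OF _ assms(6) x0] by blast
  show ?thesis using P1 P2 P3 by blast
qed

end
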